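(* Let $W$ be a symmetric binary-input discrete memoryless channel with finite output alphabet $\mathcal{Y}$, let $A$ be an invertible $N\times N$ matrix over $\mathbb{F}_2$, and let $P$ be an $N\times N$ permutation matrix. Then for every $\mathbf{y}\in\mathcal{Y}^N$, $\mathbf{y}$ and $T_P(\mathbf{y})$ are probability equivalent on $A$, i.e. $W_A(T_P(\mathbf{y}))=W_A(\mathbf{y})$.
   Context: Symmetric channel: $W(y|x)$, $x\in\{0,1\}$, $y\in\mathcal{Y}$, and there is an involution $y\mapsto 1\cdot y$ of $\mathcal{Y}$ with $W(1\cdot y|0)=W(y|1)$ and $W(1\cdot y|1)=W(y|0)$; set $0\cdot y=y$. For $\mathbf{u}\in\mathbb{F}_2^N$, $\mathbf{u}\cdot\mathbf{y}=(u_1\cdot y_1,\dots,u_N\cdot y_N)$. $W^N(\mathbf{y}|\mathbf{x})=\prod_j W(y_j|x_j)$. For a binary matrix $A$ with $N$ columns, $W_A(\mathbf{y})=\frac{1}{2^{N-1}}\sum_{\mathbf{u}\in\mathrm{row}(A)}W^N(\mathbf{u}\cdot\mathbf{y}|\mathbf{0})$, where $\mathrm{row}(A)$ is the row space over $\mathbb{F}_2$; $\mathbf{y},\mathbf{v}$ are probability equivalent on $A$ if $W_A(\mathbf{y})=W_A(\mathbf{v})$. $T_P(\mathbf{y})=\mathbf{y}P$ is the coordinate permutation of $\mathbf{y}$ given by $P$. *)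

theory Defs
  imports "HOL-Analysis.Analysis" "HOL-Library.Z2"
begin

text \<open>A binary-input DMC with finite output alphabet 'y: W x y stands for W(y|x).\<close>
definition bdmc :: "(bit \<Rightarrow> 'y::finite \<Rightarrow> real) \<Rightarrow> bool" where
  "bdmc W \<longleftrightarrow> (\<forall>x y. 0 \<le> W x y) \<and> (\<forall>x. (\<Sum>y\<in>UNIV. W x y) = 1)"

text \<open>Symmetry of the channel with respect to the involution flip (the map y \<mapsto> 1\<cdot>y).\<close>
definition symmetric_channel :: "(bit \<Rightarrow> 'y \<Rightarrow> real) \<Rightarrow> ('y \<Rightarrow> 'y) \<Rightarrow> bool" where
  "symmetric_channel W flip \<longleftrightarrow>
     (\<forall>y. flip (flip y) = y) \<and>
     (\<forall>y. W 0 (flip y) = W 1 y) \<and> (\<forall>y. W 1 (flip y) = W 0 y)"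

definition act :: "('y \<Rightarrow> 'y) \<Rightarrow> bit \<Rightarrow> 'y \<Rightarrow> 'y" where
  "act flip u y = (if u = 1 then flip y else y)"

definition vact :: "('y \<Rightarrow> 'y) \<Rightarrow> bit ^ 'n \<Rightarrow> 'y ^ 'n \<Rightarrow> 'y ^ 'n" where
  "vact flip u y = (\<chi> j. act flip (u $ j) (y $ j))"

definition WN :: "(bit \<Rightarrow> 'y \<Rightarrow> real) \<Rightarrow> 'y ^ 'n::finite \<Rightarrow> bit ^ 'n \<Rightarrow> real" where
  "WN W y x = (\<Prod>j\<in>UNIV. W (x $ j) (y $ j))"

definition row_space :: "bit ^ 'n ^ 'm::finite \<Rightarrow> (bit ^ 'n) set" where
  "row_space A = range (\<lambda>c. c v* A)"

definition W_A :: "(bit \<Rightarrow> 'y \<Rightarrow> real) \<Rightarrow> ('y \<Rightarrow> 'y) \<Rightarrow> bit ^ 'n::finite ^ 'm::finite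
                    \<Rightarrow> 'y ^ 'n \<Rightarrow> real" where
  "W_A W flip A y = (1 / 2 ^ (CARD('n) - 1)) * (\<Sum>u\<in>row_space A. WN W (vact flip u y) 0)"

definition prob_equiv :: "(bit \<Rightarrow> 'y \<Rightarrow> real) \<Rightarrow> ('y \<Rightarrow> 'y) \<Rightarrow> bit ^ 'n::finite ^ 'm::finite
                    \<Rightarrow> 'y ^ 'n \<Rightarrow> 'y ^ 'n \<Rightarrow> bool" where
  "prob_equiv W flip A y v \<longleftrightarrow> W_A W flip A y = W_A W flip A v"

definition permutation_matrix :: "bit ^ 'n ^ 'n \<Rightarrow> bool" where
  "permutation_matrix P \<longleftrightarrow>
     (\<exists>\<sigma>. \<sigma> permutes (UNIV :: 'n set) \<and> (\<forall>i j. P $ i $ j = (if \<sigma> i = j then 1 else 0)))"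

text \<open>T_P(y) = yP: the j-th entry of yP is y_i for the unique i with P i j = 1.\<close>
definition T_P :: "bit ^ 'n ^ 'n \<Rightarrow> 'y ^ 'n \<Rightarrow> 'y ^ 'n" where
  "T_P P y = (\<chi> j. y $ (THE i. P $ i $ j = 1))"

end

theory Submission
  imports Defs
begin

lemma row_space_UNIV:
  fixes A :: "bit ^ 'n::finite ^ 'n"
  assumes "invertible A"
  shows "row_space A = UNIV"
proof -
  obtain B where B: "B ** A = mat 1" using assms unfolding invertible_def by blast
  have "u \<in> row_space A" for u
  proof -
    have "(u v* B) v* A = u" by (simp add: vector_matrix_mul_assoc B)
    thus ?thesis unfolding row_space_def by (metis rangeI)
  qed
  thus ?thesis by blast
qed

lemma T_P_eq:
  assumes s: "\<sigma> permutes (UNIV :: 'n::finite set)"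
    and P: "\<forall>i j. P $ i $ j = (if \<sigma> i = j then (1::bit) else 0)"
  shows "T_P P y = (\<chi> j. y $ (inv \<sigma> j))"
proof -
  have "(THE i. P $ i $ j = 1) = inv \<sigma> j" for j
  proof (rule the_equality)
    show "P $ inv \<sigma> j $ j = 1" using P s by (simp add: permutes_inverses(1))
  next
    fix i assume "P $ i $ j = 1"
    hence "\<sigma> i = j" using P by (metis zero_neq_one)
    thus "i = inv \<sigma> j" using s by (metis permutes_inverses(2))
  qed
  thus ?thesis unfolding T_P_def by simp
qed

lemma sum_perm_invariant:
  fixes y :: "'y ^ 'n::finite" and W :: "bit \<Rightarrow> 'y \<Rightarrow> real"
  assumes t: "\<tau> permutes (UNIV :: 'n set)"
  shows "(\<Sum>u\<in>UNIV. WN W (vact flip u (\<chi> j. y $ \<tau> j)) 0)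
       = (\<Sum>u\<in>UNIV. WN W (vact flip u y) 0)"
proof -
  define g where "g = (\<lambda>u::bit^'n. (\<chi> j. u $ \<tau> j))"
  have bij: "bij_betw g UNIV UNIV"
  proof -
    define h where "h = (\<lambda>u::bit^'n. (\<chi> j. u $ inv \<tau> j))"
    have "g (h u) = u" "h (g u) = u" for u
    proof -
      have a: "\<tau> (inv \<tau> j) = j" "inv \<tau> (\<tau> j) = j" for j
        using t by (simp_all add: permutes_inverses)
      show "g (h u) = u" unfolding g_def h_def vec_eq_iff by (simp only: vec_lambda_beta a) simp
      show "h (g u) = u" unfolding g_def h_def vec_eq_iff by (simp only: vec_lambda_beta a) simp
    qed
    hence "\<And>u. g (h u) = u" "\<And>u. h (g u) = u" by auto
    thus ?thesis by (intro bij_betw_byWitness[where f'=h]) auto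
  qed
  have "(\<Sum>u\<in>UNIV. WN W (vact flip u (\<chi> j. y $ \<tau> j)) 0)
      = (\<Sum>u\<in>UNIV. WN W (vact flip (g u) (\<chi> j. y $ \<tau> j)) 0)"
    using sum.reindex_bij_betw[OF bij, symmetric] by simp
  also have "\<dots> = (\<Sum>u\<in>UNIV. WN W (vact flip u y) 0)"
  proof (rule sum.cong[OF refl])
    fix u :: "bit^'n"
    have "WN W (vact flip (g u) (\<chi> j. y $ \<tau> j)) 0
        = (\<Prod>j\<in>UNIV. (\<lambda>i. W 0 (act flip (u $ i) (y $ i))) (\<tau> j))"
      unfolding WN_def vact_def g_def by simp
    also have "\<dots> = (\<Prod>i\<in>UNIV. W 0 (act flip (u $ i) (y $ i)))"
      using prod.reindex_bij_betw[OF permutes_imp_bij[OF t]] by simp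
    also have "\<dots> = WN W (vact flip u y) 0" unfolding WN_def vact_def by simp
    finally show "WN W (vact flip (g u) (\<chi> j. y $ \<tau> j)) 0 = WN W (vact flip u y) 0" .
  qed
  finally show ?thesis .
qed

theorem corollary1:
  fixes W :: "bit \<Rightarrow> 'y::finite \<Rightarrow> real" and flip :: "'y \<Rightarrow> 'y"
    and A :: "bit ^ 'n::finite ^ 'n" and P :: "bit ^ 'n ^ 'n"
  assumes "bdmc W" and "symmetric_channel W flip"
    and "invertible A" and "permutation_matrix P"
  shows "\<forall>y :: 'y ^ 'n. prob_equiv W flip A y (T_P P y)"
proof
  fix y :: "'y ^ 'n"
  obtain \<sigma> where s: "\<sigma> permutes (UNIV :: 'n set)"
    and P: "\<forall>i j. P $ i $ j = (if \<sigma> i = j then (1::bit) else 0)"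
    using assms(4) unfolding permutation_matrix_def by blast
  have t: "inv \<sigma> permutes (UNIV :: 'n set)" using s by (rule permutes_inv)
  show "prob_equiv W flip A y (T_P P y)"
    unfolding prob_equiv_def W_A_def row_space_UNIV[OF assms(3)] T_P_eq[OF s P]
    using sum_perm_invariant[OF t, of W flip y] by simp
qed

end
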